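(* Let \(n\ge1\), \(\sigma\) a norm on \(\mathbb{R}^n\), \(V=(\mathbb{R}^n,\|\cdot\|)\) a normed space and \(I\colon\mathbb{R}^n\to V\) the identity map. For every \(\theta\in L^1(\mathbb{R}^n)\), letting \(T=I_\#[\![\theta]\!]\), i.e. \(T(f,\pi)=\int_{\mathbb{R}^n}\theta\cdot(f\circ I)\cdot\det D(\pi\circ I)\,d\mathscr{L}^n\) for \((f,\pi)\in\mathcal{D}^n(V)\), we have \(\|T\|_{\mathbf{L}^\sigma}=|\theta|\,\mu^\sigma_V\), i.e. \(\|T\|_{\mathbf{L}^\sigma}(A)=\int_{I^{-1}(A)}|\theta(p)|\,J^\sigma(\|\cdot\|)\,dp\) for Borel \(A\subset V\).
   Context: \(\mathcal{D}^n(V)\): pairs \((f,\pi)\), \(f\colon V\to\mathbb{R}\) bounded Lipschitz, \(\pi\colon V\to\mathbb{R}^n\) Lipschitz. \(\mathbf{L}^\sigma(\pi)=\mathrm{Lip}(J\circ\pi)\) with \(J\colon\mathbb{R}^n\to(\mathbb{R}^n,\sigma)\) the identity. For a seminorm \(\mathbf{L}\) on \(\mathrm{Lip}(V,\mathbb{R}^n)\) and an \(\mathbf{L}\)-current \(T\) (multilinear, with the continuity, locality and finite mass axioms), \(\|T\|_{\mathbf{L}}\) is the minimal finite Borel measure \(\mu\) with \(|T(f,\pi)|\le\mathbf{L}(\pi)^n\int|f|\,d\mu\) for all \((f,\pi)\in\mathcal{D}^n(V)\). \(J^\sigma(s)=\sup_F\mathscr{L}^n(B_\sigma)/\mathscr{L}^n(F^{-1}(B_\sigma))\),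 sup over linear \(F\) with \(F^{-1}(B_\sigma)\) containing the unit ball of the norm \(s\). \(\mu^\sigma_V(A)=J^\sigma(\|\cdot\|)\mathscr{L}^n(I^{-1}(A))\) is the Finsler volume of \(V\). *)

theory Defs
  imports "HOL-Analysis.Analysis"
begin

text \<open>Points of V = (R^n, N) are represented by the type real^'n; the norm of V is an
  explicit function N, and sigma is another norm on R^n. The identity I is implicit.\<close>

definition is_norm_fn :: "(real^'n \<Rightarrow> real) \<Rightarrow> bool" where
  "is_norm_fn N \<longleftrightarrow> (\<forall>x. N x = 0 \<longleftrightarrow> x = 0) \<and> (\<forall>x y. N (x + y) \<le> N x + N y)
     \<and> (\<forall>c x. N (c *\<^sub>R x) = \<bar>c\<bar> * N x)"

definition in_Dn :: "(real^'n \<Rightarrow> real) \<Rightarrow> (real^'n \<Rightarrow> real) \<Rightarrow> (real^'n \<Rightarrow> real^'n) \<Rightarrow> bool" where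
  "in_Dn N f \<pi> \<longleftrightarrow> (\<exists>B. \<forall>x. \<bar>f x\<bar> \<le> B) \<and> (\<exists>L. \<forall>x y. \<bar>f x - f y\<bar> \<le> L * N (x - y))
     \<and> (\<exists>L. \<forall>x y. norm (\<pi> x - \<pi> y) \<le> L * N (x - y))"

definition L_sigma :: "(real^'n \<Rightarrow> real) \<Rightarrow> (real^'n \<Rightarrow> real) \<Rightarrow> (real^'n \<Rightarrow> real^'n) \<Rightarrow> real" where
  "L_sigma \<sigma> N \<pi> = Sup {\<sigma> (\<pi> x - \<pi> y) / N (x - y) | x y. x \<noteq> y}"

text \<open>Jacobian determinant det D pi (x), set to 0 where pi is not differentiable (a null set by Rademacher).\<close>
definition jac_det :: "(real^'n \<Rightarrow> real^'n) \<Rightarrow> real^'n \<Rightarrow> real" where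
  "jac_det \<pi> x = (if \<pi> differentiable (at x) then det (matrix (frechet_derivative \<pi> (at x))) else 0)"

definition push_current :: "(real^'n \<Rightarrow> real) \<Rightarrow> (real^'n \<Rightarrow> real) \<Rightarrow> (real^'n \<Rightarrow> real^'n) \<Rightarrow> real" where
  "push_current \<theta> f \<pi> = (\<integral>x. \<theta> x * f x * jac_det \<pi> x \<partial>lebesgue)"

definition mass_bound :: "(real^'n \<Rightarrow> real) \<Rightarrow> ((real^'n \<Rightarrow> real^'n) \<Rightarrow> real)
    \<Rightarrow> ((real^'n \<Rightarrow> real) \<Rightarrow> (real^'n \<Rightarrow> real^'n) \<Rightarrow> real) \<Rightarrow> (real^'n) measure \<Rightarrow> bool" where
  "mass_bound N L T \<mu> \<longleftrightarrow> sets \<mu> = sets borel \<and> finite_measure \<mu> \<and>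
     (\<forall>f \<pi>. in_Dn N f \<pi> \<longrightarrow> \<bar>T f \<pi>\<bar> \<le> L \<pi> ^ CARD('n) * (\<integral>x. \<bar>f x\<bar> \<partial>\<mu>))"

definition is_mass :: "(real^'n \<Rightarrow> real) \<Rightarrow> ((real^'n \<Rightarrow> real^'n) \<Rightarrow> real)
    \<Rightarrow> ((real^'n \<Rightarrow> real) \<Rightarrow> (real^'n \<Rightarrow> real^'n) \<Rightarrow> real) \<Rightarrow> (real^'n) measure \<Rightarrow> bool" where
  "is_mass N L T \<mu> \<longleftrightarrow> mass_bound N L T \<mu> \<and>
     (\<forall>\<nu>. mass_bound N L T \<nu> \<longrightarrow> (\<forall>A\<in>sets borel. emeasure \<mu> A \<le> emeasure \<nu> A))"

definition J_sigma :: "(real^'n \<Rightarrow> real) \<Rightarrow> (real^'n \<Rightarrow> real) \<Rightarrow> real" where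
  "J_sigma \<sigma> s = Sup {measure lebesgue {y. \<sigma> y \<le> 1} / measure lebesgue (F -` {y. \<sigma> y \<le> 1}) | F.
      linear F \<and> {x. s x \<le> 1} \<subseteq> F -` {y. \<sigma> y \<le> 1}}"

end

theory Submission
  imports Defs
begin


proposition
 fixes f :: "real^'n \<Rightarrow> real^'n"
  assumes "linear f" "S \<in> lmeasurable"
  shows measurable_linear_image_gen: "(f ` S) \<in> lmeasurable"
    and measure_linear_image_gen: "measure lebesgue (f ` S) = \<bar>det (matrix f)\<bar> * measure lebesgue S" (is "?Q f S")
proof -
  have "\<forall>S \<in> lmeasurable. (f ` S) \<in> lmeasurable \<and> ?Q f S"
  proof (rule induct_linear_elementary [OF \<open>linear f\<close>]; intro ballI)
    fix f g and S :: "(real,'n) vec set"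
    assume "linear f" and "linear g"
      and f [rule_format]: "\<forall>S \<in> lmeasurable. f ` S \<in> lmeasurable \<and> ?Q f S"
      and g [rule_format]: "\<forall>S \<in> lmeasurable. g ` S \<in> lmeasurable \<and> ?Q g S"
      and S: "S \<in> lmeasurable"
    then have gS: "g ` S \<in> lmeasurable"
      by blast
    show "(f \<circ> g) ` S \<in> lmeasurable \<and> ?Q (f \<circ> g) S"
      using f [OF gS] g [OF S] matrix_compose [OF \<open>linear g\<close> \<open>linear f\<close>]
      by (simp add: o_def image_comp abs_mult det_mul)
  next
    fix f :: "real^'n::_ \<Rightarrow> real^'n::_" and i and S :: "(real^'n::_) set"
    assume "linear f" and 0: "\<And>x. f x $ i = 0" and "S \<in> lmeasurable"
    then have "\<not> inj f"
      by (metis (full_types) linear_injective_imp_surjective one_neq_zero surjE vec_component)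
    have detf: "det (matrix f) = 0"
      using \<open>\<not> inj f\<close> det_nz_iff_inj[OF \<open>linear f\<close>] by blast
    show "f ` S \<in> lmeasurable \<and> ?Q f S"
    proof
      show "f ` S \<in> lmeasurable"
        using lmeasurable_iff_indicator_has_integral \<open>linear f\<close> \<open>\<not> inj f\<close> negligible_UNIV negligible_linear_singular_image by blast
      have "measure lebesgue (f ` S) = 0"
        by (meson \<open>\<not> inj f\<close> \<open>linear f\<close> negligible_imp_measure0 negligible_linear_singular_image)
      also have "\<dots> = \<bar>det (matrix f)\<bar> * measure lebesgue S"
        by (simp add: detf)
      finally show "?Q f S" .
    qed
  next
    fix c and S :: "(real^'n::_) set"
    assume "S \<in> lmeasurable"
    show "(\<lambda>a. \<chi> i. c i * a $ i) ` S \<in> lmeasurable \<and> ?Q (\<lambda>a. \<chi> i. c i * a $ i) S"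
    proof
      show "(\<lambda>a. \<chi> i. c i * a $ i) ` S \<in> lmeasurable"
        by (simp add: \<open>S \<in> lmeasurable\<close> measurable_stretch)
      show "?Q (\<lambda>a. \<chi> i. c i * a $ i) S"
        by (simp add: measure_stretch [OF \<open>S \<in> lmeasurable\<close>, of c] axis_def matrix_def det_diagonal)
    qed
  next
    fix m :: "'n" and n :: "'n" and S :: "(real, 'n) vec set"
    assume "m \<noteq> n" and "S \<in> lmeasurable"
    let ?h = "\<lambda>v::(real, 'n) vec. \<chi> i. v $ Transposition.transpose m n i"
    have lin: "linear ?h"
      by (rule linearI) (simp_all add: plus_vec_def scaleR_vec_def)
    have meq: "measure lebesgue ((\<lambda>v::(real, 'n) vec. \<chi> i. v $ Transposition.transpose m n i) ` cbox a b)
             = measure lebesgue (cbox a b)" for a b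
    proof (cases "cbox a b = {}")
      case True then show ?thesis
        by simp
    next
      case False
      then have him: "?h ` (cbox a b) \<noteq> {}"
        by blast
      have eq: "?h ` (cbox a b) = cbox (?h a) (?h b)"
        by (auto simp: image_iff lambda_swap_Galois mem_box_cart) (metis transpose_involutory)+
      show ?thesis
        using him prod.permute [OF permutes_swap_id, where S=UNIV and g="\<lambda>i. (b - a)$i", symmetric]
        by (simp add: eq content_cbox_cart False)
    qed
    have "(\<chi> i j. if Transposition.transpose m n i = j then 1 else 0) = (\<chi> i j. if j = Transposition.transpose m n i then 1 else (0::real))"
      by (auto intro!: Cart_lambda_cong)
    then have "matrix ?h = transpose(\<chi> i j. mat 1 $ i $ Transposition.transpose m n j)"
      by (auto simp: matrix_eq transpose_def axis_def mat_def matrix_def)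
    then have 1: "\<bar>det (matrix ?h)\<bar> = 1"
      by (simp add: det_permute_columns permutes_swap_id sign_swap_id abs_mult)
    show "?h ` S \<in> lmeasurable \<and> ?Q ?h S"
      using measure_linear_sufficient [OF lin \<open>S \<in> lmeasurable\<close>] meq 1 by force
  next
    fix m n :: "'n" and S :: "(real, 'n) vec set"
    assume "m \<noteq> n" and "S \<in> lmeasurable"
    let ?h = "\<lambda>v::(real, 'n) vec. \<chi> i. if i = m then v $ m + v $ n else v $ i"
    have lin: "linear ?h"
      by (rule linearI) (auto simp: algebra_simps plus_vec_def scaleR_vec_def vec_eq_iff)
    have "matrix ?h = (\<chi> k. if k = m then row m (mat 1) + 1 *s row n (mat 1) else row k (mat 1))"
      by (auto simp: matrix_def axis_def row_def mat_def vec_eq_iff)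
    then have 1: "det(matrix ?h) = 1"
      using det_row_operation[OF \<open>m \<noteq> n\<close>, of "mat 1" 1] by simp
    have meq: "measure lebesgue (?h ` (cbox a b)) = measure lebesgue (cbox a b)" for a b
    proof (cases "cbox a b = {}")
      case True then show ?thesis by simp
    next
      case False
      then have ne: "(+) (\<chi> i. if i = n then - a $ n else 0) ` cbox a b \<noteq> {}"
        by auto
      let ?v = "\<chi> i. if i = n then - a $ n else 0"
      have "?h ` cbox a b
            = (+) (\<chi> i. if i = m \<or> i = n then a $ n else 0) ` ?h ` (+) ?v ` (cbox a b)"
        using \<open>m \<noteq> n\<close> unfolding image_comp o_def by (force simp: vec_eq_iff)
      then have "measure lebesgue (?h ` (cbox a b))
               = measure lebesgue ((\<lambda>v. \<chi> i. if i = m then v $ m + v $ n else v $ i) `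
                                   (+) ?v ` cbox a b)"
        by (rule ssubst) (rule measure_translation)
      also have "\<dots> = measure lebesgue ((\<lambda>v. \<chi> i. if i = m then v $ m + v $ n else v $ i) ` cbox (?v +a) (?v + b))"
        by (metis (no_types, lifting) cbox_translation)
      also have "\<dots> = measure lebesgue ((+) ?v ` cbox a b)"
        apply (subst measure_shear_interval)
        using \<open>m \<noteq> n\<close> ne apply auto
        apply (simp add: cbox_translation)
        by (metis cbox_borel cbox_translation measure_completion sets_lborel)
      also have "\<dots> = measure lebesgue (cbox a b)"
        by (rule measure_translation)
        finally show ?thesis .
      qed
    show "?h ` S \<in> lmeasurable \<and> ?Q ?h S"
      using measure_linear_sufficient [OF lin \<open>S \<in> lmeasurable\<close>] meq 1 by force
  qed
  with assms show "(f ` S) \<in> lmeasurable" "?Q f S"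
    by metis+
qed


lemma nf_0: "is_norm_fn N \<Longrightarrow> N 0 = 0"
  unfolding is_norm_fn_def by blast

lemma nf_nonneg: assumes "is_norm_fn N" shows "0 \<le> N x"
proof -
  have "N (x + (-1) *\<^sub>R x) \<le> N x + N ((-1) *\<^sub>R x)" using assms unfolding is_norm_fn_def by blast
  moreover have "N ((-1) *\<^sub>R x) = N x" using assms unfolding is_norm_fn_def by (metis abs_minus_cancel abs_one mult_1)
  ultimately show ?thesis using nf_0[OF assms] by simp
qed

lemma nf_triangle: "is_norm_fn N \<Longrightarrow> N (x + y) \<le> N x + N y"
  unfolding is_norm_fn_def by blast

lemma nf_scale: "is_norm_fn N \<Longrightarrow> N (c *\<^sub>R x) = \<bar>c\<bar> * N x"
  unfolding is_norm_fn_def by blast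

lemma nf_eq0: "is_norm_fn N \<Longrightarrow> N x = 0 \<longleftrightarrow> x = 0"
  unfolding is_norm_fn_def by blast

lemma nf_minus: "is_norm_fn N \<Longrightarrow> N (- x) = N x"
  using nf_scale[of N "-1" x] by simp

lemma nf_commute: "is_norm_fn N \<Longrightarrow> N (x - y) = N (y - x)"
  using nf_minus[of N "x - y"] by simp

lemma nf_sum: assumes "is_norm_fn N" shows "N (sum f S) \<le> (\<Sum>i\<in>S. N (f i))"
proof (induction S rule: infinite_finite_induct)
  case (infinite A) then show ?case using nf_0[OF assms] by simp
next
  case empty then show ?case using nf_0[OF assms] by simp
next
  case (insert x F)
  then show ?case using nf_triangle[OF assms, of "f x" "sum f F"] by simp
qed

lemma nf_upper: fixes N :: "real^'n \<Rightarrow> real" assumes "is_norm_fn N"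
  shows "\<exists>C>0. \<forall>x. N x \<le> C * norm x"
proof -
  define C where "C = (\<Sum>i\<in>UNIV. N (axis i 1)) + 1"
  have C0: "C > 0" unfolding C_def using nf_nonneg[OF assms] by (simp add: sum_nonneg add_nonneg_pos)
  have "N x \<le> C * norm x" for x
  proof -
    have "x = (\<Sum>i\<in>UNIV. x $ i *\<^sub>R axis i 1)" using basis_expansion[of x] by (simp add: scalar_mult_eq_scaleR)
    hence "N x \<le> (\<Sum>i\<in>UNIV. N (x $ i *\<^sub>R axis i 1))" using nf_sum[OF assms] by metis
    also have "\<dots> = (\<Sum>i\<in>UNIV. \<bar>x $ i\<bar> * N (axis i 1))" using nf_scale[OF assms] by simp
    also have "\<dots> \<le> (\<Sum>i\<in>UNIV. norm x * N (axis i 1))"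
      by (intro sum_mono mult_right_mono) (auto simp: component_le_norm_cart nf_nonneg[OF assms])
    also have "\<dots> \<le> C * norm x" unfolding C_def by (simp add: sum_distrib_left[symmetric] algebra_simps)
    finally show ?thesis .
  qed
  with C0 show ?thesis by blast
qed

lemma nf_lipschitz: fixes N :: "real^'n \<Rightarrow> real" assumes "is_norm_fn N"
  shows "\<bar>N x - N y\<bar> \<le> N (x - y)"
proof -
  have "N x \<le> N (x - y) + N y" using nf_triangle[OF assms, of "x - y" y] by simp
  moreover have "N y \<le> N (y - x) + N x" using nf_triangle[OF assms, of "y - x" x] by simp
  ultimately show ?thesis using nf_commute[OF assms, of x y] by linarith
qed

lemma nf_continuous: fixes N :: "real^'n \<Rightarrow> real" assumes "is_norm_fn N"
  shows "continuous_on S N"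
proof -
  obtain C where C: "C > 0" "\<forall>x. N x \<le> C * norm x" using nf_upper[OF assms] by blast
  have "\<bar>N x - N y\<bar> \<le> C * dist x y" for x y
    using nf_lipschitz[OF assms, of x y] C(2)[rule_format, of "x - y"] by (simp add: dist_norm)
  then have "uniformly_continuous_on UNIV N"
    unfolding uniformly_continuous_on_def
    apply (intro allI impI)
    subgoal for e apply (rule exI[of _ "e / C"]) using C(1)
      by (auto simp: dist_real_def) (metis le_less_trans mult.commute pos_less_divide_eq) done
  then show ?thesis using uniformly_continuous_imp_continuous continuous_on_subset by blast
qed

lemma nf_lower: fixes N :: "real^'n \<Rightarrow> real" assumes "is_norm_fn N"
  shows "\<exists>c>0. \<forall>x. c * norm x \<le> N x"
proof -
  have "sphere (0::real^'n) 1 \<noteq> {}" by (simp add: sphere_eq_empty)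
  then obtain x0 where x0: "x0 \<in> sphere 0 1" "\<forall>x\<in>sphere 0 1. N x0 \<le> N x"
    using continuous_attains_inf[OF compact_sphere _ nf_continuous[OF assms]] by blast
  have c0: "N x0 > 0" using x0(1) nf_nonneg[OF assms, of x0] nf_eq0[OF assms, of x0] by force
  have "N x0 * norm x \<le> N x" for x
  proof (cases "x = 0")
    case True then show ?thesis using nf_0[OF assms] by simp
  next
    case False
    then have "(1 / norm x) *\<^sub>R x \<in> sphere 0 1" by simp
    then have "N x0 \<le> N ((1 / norm x) *\<^sub>R x)" using x0 by blast
    also have "\<dots> = N x / norm x" using nf_scale[OF assms] by simp
    finally show ?thesis using False by (simp add: field_simps)
  qed
  with c0 show ?thesis by blast
qed


lemma nf_ball_sub: fixes N :: "real^'n \<Rightarrow> real" assumes "is_norm_fn N"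
  shows "\<exists>\<delta>>0. ball 0 \<delta> \<subseteq> {x. N x \<le> 1}"
proof -
  obtain C where C: "C > 0" "\<forall>x. N x \<le> C * norm x" using nf_upper[OF assms] by blast
  have "ball 0 (1/C) \<subseteq> {x. N x \<le> 1}"
  proof
    fix x assume "x \<in> ball (0::real^'n) (1/C)"
    then have "norm x < 1 / C" by simp
    then have "C * norm x \<le> 1" using C(1) by (simp add: field_simps)
    then show "x \<in> {x. N x \<le> 1}" using C(2) by (metis mem_Collect_eq order_trans)
  qed
  then show ?thesis using C(1) by (intro exI[of _ "1/C"]) auto
qed

lemma nf_ball_compact: fixes N :: "real^'n \<Rightarrow> real" assumes "is_norm_fn N"
  shows "compact {x. N x \<le> 1}"
proof -
  obtain c where c: "c > 0" "\<forall>x. c * norm x \<le> N x" using nf_lower[OF assms] by blast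
  have "closed {x. N x \<le> 1}"
    by (rule closed_Collect_le[OF nf_continuous[OF assms] continuous_on_const])
  moreover have "bounded {x. N x \<le> 1}"
    unfolding bounded_iff
  proof (intro exI[of _ "1/c"] ballI)
    fix x assume "x \<in> {x. N x \<le> 1}"
    then have "c * norm x \<le> 1" using c(2) by (metis mem_Collect_eq order_trans)
    then show "norm x \<le> 1 / c" using c(1) by (simp add: field_simps)
  qed
  ultimately show ?thesis by (simp add: compact_eq_bounded_closed)
qed

lemma measure_ball_pos: "\<delta> > 0 \<Longrightarrow> measure lebesgue (ball (c::real^'n) \<delta>) > 0"
  using content_ball_pos[of \<delta> c] by (simp add: measure_completion)

lemma measure_ball_eq: "measure lebesgue (ball (c::real^'n) \<delta>) = measure lebesgue (ball (0::real^'n) \<delta>)"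
  using content_ball_conv_unit_ball[of \<delta> c] content_ball_conv_unit_ball[of \<delta> "0::real^'n"]
  by (cases "\<delta> \<ge> 0") (auto simp: measure_completion ball_empty)

lemma nf_ball_lmeas: fixes N :: "real^'n \<Rightarrow> real" assumes "is_norm_fn N"
  shows "{x. N x \<le> 1} \<in> lmeasurable" "measure lebesgue {x. N x \<le> 1} > 0"
proof -
  show L: "{x. N x \<le> 1} \<in> lmeasurable" using nf_ball_compact[OF assms] lmeasurable_compact by blast
  obtain \<delta> where d: "\<delta> > 0" "ball 0 \<delta> \<subseteq> {x. N x \<le> 1}" using nf_ball_sub[OF assms] by blast
  have "measure lebesgue (ball (0::real^'n) \<delta>) \<le> measure lebesgue {x. N x \<le> 1}"
    by (rule measure_mono_fmeasurable[OF d(2) _ L]) auto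
  then show "measure lebesgue {x. N x \<le> 1} > 0" using measure_ball_pos[OF d(1), of 0] by (meson less_le_trans)
qed

lemma linear_inverse_ex: fixes F :: "real^'n \<Rightarrow> real^'n"
  assumes "linear F" "det (matrix F) \<noteq> 0"
  shows "\<exists>G. linear G \<and> (\<forall>x. G (F x) = x) \<and> (\<forall>x. F (G x) = x)"
  using assms det_nz_iff_inj linear_injective_isomorphism by metis

lemma inv_ratio: fixes F :: "real^'n \<Rightarrow> real^'n" and \<sigma> :: "real^'n \<Rightarrow> real"
  assumes "is_norm_fn \<sigma>" "linear F" "det (matrix F) \<noteq> 0"
  shows "measure lebesgue {y. \<sigma> y \<le> 1} / measure lebesgue (F -` {y. \<sigma> y \<le> 1}) = \<bar>det (matrix F)\<bar>"
proof -
  obtain G where G: "linear G" "\<forall>x. G (F x) = x" "\<forall>x. F (G x) = x" using linear_inverse_ex[OF assms(2,3)] by blast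
  have eq: "F -` {y. \<sigma> y \<le> 1} = G ` {y. \<sigma> y \<le> 1}"
  proof
    show "F -` {y. \<sigma> y \<le> 1} \<subseteq> G ` {y. \<sigma> y \<le> 1}"
    proof
      fix x assume "x \<in> F -` {y. \<sigma> y \<le> 1}"
      then have "F x \<in> {y. \<sigma> y \<le> 1}" by simp
      moreover have "x = G (F x)" using G by simp
      ultimately show "x \<in> G ` {y. \<sigma> y \<le> 1}" by blast
    qed
    show "G ` {y. \<sigma> y \<le> 1} \<subseteq> F -` {y. \<sigma> y \<le> 1}" using G by auto
  qed
  have m: "measure lebesgue (G ` {y. \<sigma> y \<le> 1}) = \<bar>det (matrix G)\<bar> * measure lebesgue {y. \<sigma> y \<le> 1}"
    by (rule measure_linear_image_gen[OF G(1) nf_ball_lmeas(1)[OF assms(1)]])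
  have "G \<circ> F = id" using G by auto
  then have "matrix G ** matrix F = mat 1" using matrix_compose[OF assms(2) G(1)] matrix_id_mat_1 by metis
  then have "det (matrix G) * det (matrix F) = 1" by (metis det_I det_mul)
  then have dG: "\<bar>det (matrix G)\<bar> = 1 / \<bar>det (matrix F)\<bar>" using assms(3) by (simp add: field_simps abs_mult[symmetric])
  show ?thesis using nf_ball_lmeas(2)[OF assms(1)] assms(3) unfolding eq m dG by (simp add: field_simps)
qed


lemma sing_ratio: fixes F :: "real^'n \<Rightarrow> real^'n" and \<sigma> N :: "real^'n \<Rightarrow> real"
  assumes "is_norm_fn N" "linear F" "det (matrix F) = 0" "{x. N x \<le> 1} \<subseteq> F -` {y. \<sigma> y \<le> 1}"
  shows "measure lebesgue (F -` {y. \<sigma> y \<le> 1}) = 0"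
proof (cases "F -` {y. \<sigma> y \<le> 1} \<in> lmeasurable")
  case False
  show ?thesis
  proof (cases "F -` {y. \<sigma> y \<le> 1} \<in> sets lebesgue")
    case True
    have "emeasure lebesgue (F -` {y. \<sigma> y \<le> 1}) = \<infinity>"
    proof (rule ccontr)
      assume "emeasure lebesgue (F -` {y. \<sigma> y \<le> 1}) \<noteq> \<infinity>"
      then have "emeasure lebesgue (F -` {y. \<sigma> y \<le> 1}) < \<infinity>" by (simp add: less_top[symmetric])
      with True have "F -` {y. \<sigma> y \<le> 1} \<in> lmeasurable" by (rule fmeasurableI)
      with False show False by contradiction
    qed
    then show ?thesis by (simp add: measure_def)
  qed (simp add: measure_notin_sets)
next
  case True
  define S where "S = F -` {y. \<sigma> y \<le> 1}"
  have "\<not> inj F" using assms(2,3) det_nz_iff_inj by blast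
  then obtain a b where ab: "a \<noteq> b" "F a = F b" unfolding inj_def by blast
  define k where "k = a - b"
  have k: "k \<noteq> 0" "F k = 0" using ab assms(2) by (auto simp: k_def linear_diff)
  obtain \<delta> where d: "\<delta> > 0" "ball 0 \<delta> \<subseteq> {x. N x \<le> 1}" using nf_ball_sub[OF assms(1)] by blast
  define u where "u = (2 * \<delta> / norm k) *\<^sub>R k"
  have nu: "norm u = 2 * \<delta>" using k d by (simp add: u_def)
  have Fu: "F u = 0" using k assms(2) by (simp add: u_def linear_scale)
  define D where "D j = ball (real j *\<^sub>R u) \<delta>" for j :: nat
  have DS: "D j \<subseteq> S" for j
  proof
    fix x assume "x \<in> D j"
    then have "dist (real j *\<^sub>R u) x < \<delta>" by (simp add: D_def)
    then have "x - real j *\<^sub>R u \<in> ball 0 \<delta>" by (simp add: dist_norm norm_minus_commute)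
    then have "x - real j *\<^sub>R u \<in> S" using d(2) assms(4) S_def by blast
    moreover have "F (x - real j *\<^sub>R u) = F x" using Fu assms(2) by (simp add: linear_diff linear_scale)
    ultimately show "x \<in> S" by (simp add: S_def)
  qed
  have disj: "disjoint_family_on D UNIV"
    unfolding disjoint_family_on_def
  proof (intro ballI impI)
    fix i j :: nat assume "i \<noteq> j"
    show "D i \<inter> D j = {}"
    proof (rule ccontr)
      assume "D i \<inter> D j \<noteq> {}"
      then obtain x where x: "dist (real i *\<^sub>R u) x < \<delta>" "dist (real j *\<^sub>R u) x < \<delta>" by (auto simp: D_def)
      have "dist (real i *\<^sub>R u) (real j *\<^sub>R u) \<le> dist (real i *\<^sub>R u) x + dist x (real j *\<^sub>R u)" by (rule dist_triangle)
      moreover have "dist x (real j *\<^sub>R u) = dist (real j *\<^sub>R u) x" by (rule dist_commute)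
      ultimately have "dist (real i *\<^sub>R u) (real j *\<^sub>R u) < 2 * \<delta>" using x by linarith
      moreover have "dist (real i *\<^sub>R u) (real j *\<^sub>R u) = \<bar>real i - real j\<bar> * (2 * \<delta>)"
        by (simp add: dist_norm nu scaleR_diff_left[symmetric])
      moreover have "\<bar>real i - real j\<bar> \<ge> 1" using \<open>i \<noteq> j\<close> by linarith
      moreover have "1 * (2 * \<delta>) \<le> \<bar>real i - real j\<bar> * (2 * \<delta>)"
        using calculation(3) d(1) by (intro mult_right_mono) auto
      ultimately show False by linarith
    qed
  qed
  define v where "v = measure lebesgue (ball (0::real^'n) \<delta>)"
  have v: "v > 0" unfolding v_def using measure_ball_pos[OF d(1)] .
  have "real m * v \<le> measure lebesgue S" for m
  proof -
    have fin: "emeasure lebesgue (D j) \<noteq> \<infinity>" for j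
      unfolding D_def infinity_ennreal_def by (rule fmeasurableD2[OF lmeasurable_ball])
    have sets: "D ` {..<m} \<subseteq> sets lebesgue" by (auto simp: D_def)
    have dj: "disjoint_family_on D {..<m}" by (rule disjoint_family_on_mono[OF _ disj]) simp
    have "measure lebesgue (\<Union>j\<in>{..<m}. D j) = (\<Sum>j\<in>{..<m}. measure lebesgue (D j))"
      by (rule measure_finite_Union[OF _ sets dj fin]) simp
    also have "\<dots> = real m * v"
    proof -
      have "measure lebesgue (D j) = v" for j unfolding D_def v_def by (rule measure_ball_eq)
      then show ?thesis by simp
    qed
    finally have "real m * v = measure lebesgue (\<Union>j\<in>{..<m}. D j)" by simp
    also have "\<dots> \<le> measure lebesgue S"
    proof (rule measure_mono_fmeasurable)
      show "(\<Union>j\<in>{..<m}. D j) \<subseteq> S" using DS by blast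
      show "(\<Union>j\<in>{..<m}. D j) \<in> sets lebesgue" using sets by blast
      show "S \<in> lmeasurable" using True S_def by simp
    qed
    finally show ?thesis .
  qed
  moreover obtain m :: nat where m: "measure lebesgue S / v < real m" using reals_Archimedean2 by blast
  ultimately have "real m \<le> measure lebesgue S / v" using v by (simp add: pos_le_divide_eq)
  with m show ?thesis by linarith
qed


lemma not_lmeas_measure0: "S \<notin> lmeasurable \<Longrightarrow> measure lebesgue S = 0"
proof (cases "S \<in> sets lebesgue")
  case True
  assume F: "S \<notin> lmeasurable"
  have "emeasure lebesgue S = \<infinity>"
  proof (rule ccontr)
    assume "emeasure lebesgue S \<noteq> \<infinity>"
    then have "emeasure lebesgue S < \<infinity>" by (simp add: less_top[symmetric])
    with True have "S \<in> lmeasurable" by (rule fmeasurableI)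
    with F show False by contradiction
  qed
  then show ?thesis by (simp add: measure_def)
qed (simp add: measure_notin_sets)

definition Jset :: "(real^'n \<Rightarrow> real) \<Rightarrow> (real^'n \<Rightarrow> real) \<Rightarrow> real set" where
  "Jset \<sigma> s = {measure lebesgue {y. \<sigma> y \<le> 1} / measure lebesgue (F -` {y. \<sigma> y \<le> 1}) | F.
      linear F \<and> {x. s x \<le> 1} \<subseteq> F -` {y. \<sigma> y \<le> 1}}"

lemma J_sigma_Jset: "J_sigma \<sigma> s = Sup (Jset \<sigma> s)"
  unfolding J_sigma_def Jset_def by simp

lemma Jset_ne: fixes \<sigma> s :: "real^'n \<Rightarrow> real" assumes "is_norm_fn \<sigma>" shows "Jset \<sigma> s \<noteq> {}"
proof -
  have "linear (\<lambda>x::real^'n. 0::real^'n)" by (rule linear_zero)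
  moreover have "{x. s x \<le> 1} \<subseteq> (\<lambda>x::real^'n. 0::real^'n) -` {y. \<sigma> y \<le> 1}" using nf_0[OF assms] by auto
  ultimately show ?thesis unfolding Jset_def by blast
qed

lemma Jset_nonneg: "r \<in> Jset \<sigma> s \<Longrightarrow> 0 \<le> r"
  unfolding Jset_def by auto

lemma Jset_bdd: fixes \<sigma> N :: "real^'n \<Rightarrow> real"
  assumes "is_norm_fn \<sigma>" "is_norm_fn N"
  shows "bdd_above (Jset \<sigma> N)"
proof -
  let ?vs = "measure lebesgue {y. \<sigma> y \<le> 1}" and ?vn = "measure lebesgue {x. N x \<le> 1}"
  have vn: "?vn > 0" using nf_ball_lmeas(2)[OF assms(2)] .
  have "r \<le> ?vs / ?vn" if rin: "r \<in> Jset \<sigma> N" for r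
  proof -
    obtain F where F: "r = ?vs / measure lebesgue (F -` {y. \<sigma> y \<le> 1})" "linear F" "{x. N x \<le> 1} \<subseteq> F -` {y. \<sigma> y \<le> 1}"
      using rin unfolding Jset_def by blast
    show ?thesis
    proof (cases "F -` {y. \<sigma> y \<le> 1} \<in> lmeasurable")
      case True
      have "?vn \<le> measure lebesgue (F -` {y. \<sigma> y \<le> 1})"
        by (rule measure_mono_fmeasurable[OF F(3) _ True]) (use nf_ball_lmeas(1)[OF assms(2)] in blast)
      then show ?thesis unfolding F(1) using vn by (intro divide_left_mono) auto
    next
      case False
      then have "r = 0" unfolding F(1) using not_lmeas_measure0[OF False] by simp
      then show ?thesis using vn by simp
    qed
  qed
  then show ?thesis unfolding bdd_above_def by blast
qed

lemma J_nonneg: fixes \<sigma> N :: "real^'n \<Rightarrow> real"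
  assumes "is_norm_fn \<sigma>" "is_norm_fn N"
  shows "0 \<le> J_sigma \<sigma> N"
proof -
  obtain r where r: "r \<in> Jset \<sigma> N" using Jset_ne[OF assms(1)] by blast
  have "r \<le> Sup (Jset \<sigma> N)" by (rule cSup_upper[OF r Jset_bdd[OF assms]])
  then show ?thesis using Jset_nonneg[OF r] J_sigma_Jset by (metis order_trans)
qed

lemma J_upper: fixes \<sigma> N :: "real^'n \<Rightarrow> real" and F :: "real^'n \<Rightarrow> real^'n"
  assumes "is_norm_fn \<sigma>" "is_norm_fn N" "linear F" "{x. N x \<le> 1} \<subseteq> F -` {y. \<sigma> y \<le> 1}"
  shows "\<bar>det (matrix F)\<bar> \<le> J_sigma \<sigma> N"
proof (cases "det (matrix F) = 0")
  case True
  then show ?thesis using J_nonneg[OF assms(1,2)] by simp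
next
  case False
  have "\<bar>det (matrix F)\<bar> \<in> Jset \<sigma> N"
    unfolding Jset_def using inv_ratio[OF assms(1,3) False, symmetric] assms(3,4) by blast
  then show ?thesis unfolding J_sigma_Jset by (rule cSup_upper[OF _ Jset_bdd[OF assms(1,2)]])
qed

lemma Jset_elem: fixes \<sigma> N :: "real^'n \<Rightarrow> real"
  assumes "is_norm_fn \<sigma>" "is_norm_fn N" "r \<in> Jset \<sigma> N"
  shows "\<exists>F. linear F \<and> {x. N x \<le> 1} \<subseteq> F -` {y. \<sigma> y \<le> 1} \<and> r \<le> \<bar>det (matrix F)\<bar>"
proof -
  obtain F where F: "r = measure lebesgue {y. \<sigma> y \<le> 1} / measure lebesgue (F -` {y. \<sigma> y \<le> 1})"
     "linear F" "{x. N x \<le> 1} \<subseteq> F -` {y. \<sigma> y \<le> 1}"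
    using assms(3) unfolding Jset_def by blast
  have "r \<le> \<bar>det (matrix F)\<bar>"
  proof (cases "det (matrix F) = 0")
    case True
    then show ?thesis using sing_ratio[OF assms(2) F(2) True F(3)] F(1) by simp
  next
    case False
    then show ?thesis using inv_ratio[OF assms(1) F(2) False] F(1) by simp
  qed
  with F show ?thesis by blast
qed


lemma ex_nonzero_vec: "\<exists>v::real^'n. v \<noteq> 0"
  by (rule exI[of _ "axis undefined 1"]) (simp add: axis_eq_0_iff)

lemma nf_pos: "is_norm_fn N \<Longrightarrow> x \<noteq> 0 \<Longrightarrow> N x > 0"
  using nf_nonneg[of N x] nf_eq0[of N x] by linarith

lemma L_sigma_props:
  fixes \<sigma> N :: "real^'n \<Rightarrow> real" and \<pi> :: "real^'n \<Rightarrow> real^'n"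
  assumes s: "is_norm_fn \<sigma>" and n: "is_norm_fn N"
    and lip: "\<forall>x y. norm (\<pi> x - \<pi> y) \<le> L0 * N (x - y)"
  shows "bdd_above {\<sigma> (\<pi> x - \<pi> y) / N (x - y) | x y. x \<noteq> y}"
    and "\<sigma> (\<pi> x - \<pi> y) \<le> L_sigma \<sigma> N \<pi> * N (x - y)"
    and "0 \<le> L_sigma \<sigma> N \<pi>"
proof -
  let ?S = "{\<sigma> (\<pi> x - \<pi> y) / N (x - y) | x y. x \<noteq> y}"
  obtain C where C: "C > 0" "\<forall>x. \<sigma> x \<le> C * norm x" using nf_upper[OF s] by blast
  have el: "\<sigma> (\<pi> x - \<pi> y) / N (x - y) \<le> C * \<bar>L0\<bar>" if "x \<noteq> y" for x y
  proof -
    have Np: "N (x - y) > 0" using nf_pos[OF n] that by simp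
    have "\<sigma> (\<pi> x - \<pi> y) \<le> C * norm (\<pi> x - \<pi> y)" using C by blast
    also have "\<dots> \<le> C * (L0 * N (x - y))" using lip C(1) by (intro mult_left_mono) auto
    also have "\<dots> \<le> C * \<bar>L0\<bar> * N (x - y)" using C(1) Np
      by (simp add: mult.assoc mult_left_mono mult_right_mono)
    finally show ?thesis using Np by (simp add: divide_le_eq)
  qed
  show bdd: "bdd_above ?S" unfolding bdd_above_def using el by blast
  have ne: "?S \<noteq> {}"
  proof -
    obtain v :: "real^'n" where v: "v \<noteq> 0" using ex_nonzero_vec by blast
    then have "\<sigma> (\<pi> v - \<pi> 0) / N (v - 0) \<in> ?S" by blast
    then show ?thesis by blast
  qed
  show "\<sigma> (\<pi> x - \<pi> y) \<le> L_sigma \<sigma> N \<pi> * N (x - y)"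
  proof (cases "x = y")
    case True then show ?thesis using nf_0[OF s] nf_0[OF n] by simp
  next
    case False
    have Np: "N (x - y) > 0" using nf_pos[OF n] False by simp
    have "\<sigma> (\<pi> x - \<pi> y) / N (x - y) \<le> Sup ?S" by (rule cSup_upper[OF _ bdd]) (use False in blast)
    then show ?thesis unfolding L_sigma_def using Np by (simp add: divide_le_eq)
  qed
  obtain a where a: "a \<in> ?S" using ne by blast
  have "0 \<le> a" using a nf_nonneg[OF s] nf_nonneg[OF n] by auto
  also have "a \<le> Sup ?S" by (rule cSup_upper[OF a bdd])
  finally show "0 \<le> L_sigma \<sigma> N \<pi>" unfolding L_sigma_def .
qed

lemma L_sigma_le1:
  fixes \<sigma> N :: "real^'n \<Rightarrow> real" and F :: "real^'n \<Rightarrow> real^'n"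
  assumes s: "is_norm_fn \<sigma>" and n: "is_norm_fn N" and "linear F"
    and b: "\<forall>v. \<sigma> (F v) \<le> N v"
  shows "L_sigma \<sigma> N F \<le> 1"
proof -
  let ?S = "{\<sigma> (F x - F y) / N (x - y) | x y. x \<noteq> y}"
  have ne: "?S \<noteq> {}"
  proof -
    obtain v :: "real^'n" where v: "v \<noteq> 0" using ex_nonzero_vec by blast
    then have "\<sigma> (F v - F 0) / N (v - 0) \<in> ?S" by blast
    then show ?thesis by blast
  qed
  have "r \<le> 1" if rin: "r \<in> ?S" for r
  proof -
    obtain x y where r: "r = \<sigma> (F x - F y) / N (x - y)" "x \<noteq> y" using rin by blast
    have Np: "N (x - y) > 0" using nf_pos[OF n] r(2) by simp
    have "\<sigma> (F x - F y) \<le> N (x - y)" using b assms(3) by (metis linear_diff)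
    then show ?thesis using r(1) Np by (simp add: divide_le_eq)
  qed
  then show ?thesis unfolding L_sigma_def by (intro cSup_least[OF ne]) blast
qed

lemma deriv_bound:
  fixes \<sigma> N :: "real^'n \<Rightarrow> real" and \<pi> D :: "real^'n \<Rightarrow> real^'n"
  assumes s: "is_norm_fn \<sigma>" and n: "is_norm_fn N"
    and der: "(\<pi> has_derivative D) (at x)"
    and lip: "\<forall>a b. \<sigma> (\<pi> a - \<pi> b) \<le> L * N (a - b)"
  shows "\<sigma> (D v) \<le> L * N v"
proof -
  have lin: "linear D" using der has_derivative_linear by blast
  obtain C where C: "C > 0" "\<forall>x. \<sigma> x \<le> C * norm x" using nf_upper[OF s] by blast
  show ?thesis
  proof (cases "v = 0")
    case True then show ?thesis using lin nf_0[OF s] nf_0[OF n] by (simp add: linear_0)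
  next
    case False
    have nv: "norm v > 0" using False by simp
    show ?thesis
    proof (rule field_le_epsilon)
      fix e :: real assume e: "e > 0"
      define e0 where "e0 = e / (C * norm v)"
      have e0: "e0 > 0" unfolding e0_def using e C(1) nv by simp
      obtain d where d: "d > 0" "\<forall>y. norm (y - x) < d \<longrightarrow> norm (\<pi> y - \<pi> x - D (y - x)) \<le> e0 * norm (y - x)"
        using der e0 unfolding has_derivative_at_alt by blast
      define t where "t = d / (2 * norm v)"
      have t: "t > 0" unfolding t_def using d(1) nv by simp
      define y where "y = x + t *\<^sub>R v"
      have yx: "y - x = t *\<^sub>R v" unfolding y_def by simp
      have "norm (y - x) = d / 2" unfolding yx t_def using nv d(1) by simp
      then have "norm (y - x) < d" using d(1) by simp
      then have R0: "norm (\<pi> y - \<pi> x - D (y - x)) \<le> e0 * norm (y - x)"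
        using d(2) by blast
      have nyx: "norm (y - x) = t * norm v" unfolding yx using t by simp
      have R: "norm (\<pi> y - \<pi> x - D (t *\<^sub>R v)) \<le> e0 * (t * norm v)"
        using R0 unfolding nyx unfolding yx .
      have Dt: "D (t *\<^sub>R v) = t *\<^sub>R D v" using lin by (simp add: linear_scale)
      have "t * \<sigma> (D v) = \<sigma> (D (t *\<^sub>R v))" using Dt nf_scale[OF s, of t "D v"] t by simp
      also have "\<dots> \<le> \<sigma> (\<pi> y - \<pi> x) + \<sigma> (D (t *\<^sub>R v) - (\<pi> y - \<pi> x))"
        using nf_triangle[OF s, of "\<pi> y - \<pi> x" "D (t *\<^sub>R v) - (\<pi> y - \<pi> x)"] by simp
      also have "\<sigma> (D (t *\<^sub>R v) - (\<pi> y - \<pi> x)) \<le> C * norm (\<pi> y - \<pi> x - D (t *\<^sub>R v))"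
        using C(2) by (metis norm_minus_commute)
      also have "\<sigma> (\<pi> y - \<pi> x) \<le> L * N (t *\<^sub>R v)" using lip yx by metis
      also have "N (t *\<^sub>R v) = t * N v" using nf_scale[OF n, of t v] t by simp
      finally have "t * \<sigma> (D v) \<le> L * (t * N v) + C * (e0 * (t * norm v))"
        using R C(1) by (smt (verit) mult_left_mono)
      then have "t * \<sigma> (D v) \<le> t * (L * N v + C * e0 * norm v)" by (simp add: algebra_simps)
      then have "\<sigma> (D v) \<le> L * N v + C * e0 * norm v" using t by simp
      moreover have "C * e0 * norm v = e" unfolding e0_def using C(1) nv by simp
      ultimately show "\<sigma> (D v) \<le> L * N v + e" by simp
    qed
  qed
qed

lemma det_not_inj0: fixes F :: "real^'n \<Rightarrow> real^'n"
  assumes "linear F" "\<not> inj F" shows "det (matrix F) = 0"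
  using det_nz_iff_inj[OF assms(1)] assms(2) by blast

lemma det_mat_scalar: "det (mat c :: real^'n^'n) = c ^ CARD('n)"
  by (subst det_diagonal) (auto simp: mat_def)

lemma jac_bound:
  fixes \<sigma> N :: "real^'n \<Rightarrow> real" and \<pi> :: "real^'n \<Rightarrow> real^'n"
  assumes s: "is_norm_fn \<sigma>" and n: "is_norm_fn N"
    and lip: "\<forall>x y. norm (\<pi> x - \<pi> y) \<le> L0 * N (x - y)"
  shows "\<bar>jac_det \<pi> x\<bar> \<le> L_sigma \<sigma> N \<pi> ^ CARD('n) * J_sigma \<sigma> N"
proof -
  define L where "L = L_sigma \<sigma> N \<pi>"
  have L0: "0 \<le> L" unfolding L_def by (rule L_sigma_props(3)[OF s n lip])
  have Lb: "\<forall>a b. \<sigma> (\<pi> a - \<pi> b) \<le> L * N (a - b)" unfolding L_def using L_sigma_props(2)[OF s n lip] by blast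
  have J0: "0 \<le> J_sigma \<sigma> N" by (rule J_nonneg[OF s n])
  show ?thesis
  proof (cases "\<pi> differentiable (at x)")
    case False
    then show ?thesis unfolding jac_det_def L_def[symmetric] using L0 J0 by simp
  next
    case True
    define D where "D = frechet_derivative \<pi> (at x)"
    have der: "(\<pi> has_derivative D) (at x)" unfolding D_def using True frechet_derivative_works by blast
    have lin: "linear D" using der has_derivative_linear by blast
    have bnd: "\<sigma> (D v) \<le> L * N v" for v by (rule deriv_bound[OF s n der Lb])
    have jd: "jac_det \<pi> x = det (matrix D)" unfolding jac_det_def D_def using True by simp
    show ?thesis
    proof (cases "L = 0")
      case True
      have "D v = 0" for v using bnd[of v] True nf_nonneg[OF s, of "D v"] nf_eq0[OF s, of "D v"] by simp
      moreover obtain w :: "real^'n" where "w \<noteq> 0" using ex_nonzero_vec by blast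
      ultimately have "\<not> inj D" unfolding inj_def by (metis lin linear_0)
      then have "det (matrix D) = 0" by (rule det_not_inj0[OF lin])
      then show ?thesis unfolding jd L_def[symmetric] using L0 J0 by simp
    next
      case False
      then have Lp: "L > 0" using L0 by simp
      define F where "F = D \<circ> (\<lambda>v. (1 / L) *\<^sub>R v)"
      have linS: "linear (\<lambda>v::real^'n. (1 / L) *\<^sub>R v)" by (rule linear_compose_scale_right) (rule linear_id[unfolded id_def])
      have linF: "linear F" unfolding F_def by (rule linear_compose[OF linS lin])
      have "{x. N x \<le> 1} \<subseteq> F -` {y. \<sigma> y \<le> 1}"
      proof
        fix v assume "v \<in> {x. N x \<le> 1}"
        then have "N v \<le> 1" by simp
        have "\<sigma> (F v) \<le> L * N ((1 / L) *\<^sub>R v)" unfolding F_def using bnd by simp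
        also have "\<dots> = N v" using nf_scale[OF n, of "1/L" v] Lp by simp
        finally show "v \<in> F -` {y. \<sigma> y \<le> 1}" using \<open>N v \<le> 1\<close> by simp
      qed
      then have Fb: "\<bar>det (matrix F)\<bar> \<le> J_sigma \<sigma> N" by (rule J_upper[OF s n linF])
      have "matrix F = matrix D ** matrix (\<lambda>v::real^'n. (1 / L) *\<^sub>R v)"
        unfolding F_def by (rule matrix_compose[OF linS lin])
      also have "matrix (\<lambda>v::real^'n. (1 / L) *\<^sub>R v) = mat (1 / L)" using matrix_scaleR[of "1/L"] by simp
      finally have "det (matrix F) = det (matrix D) * (1 / L) ^ CARD('n)" by (simp add: det_mul det_mat_scalar)
      then have eqD: "det (matrix D) = det (matrix F) * L ^ CARD('n)" using Lp
        by (simp add: power_divide field_simps)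
      have "\<bar>det (matrix D)\<bar> = \<bar>det (matrix F)\<bar> * \<bar>L ^ CARD('n)\<bar>" unfolding eqD by (rule abs_mult)
      also have "\<bar>L ^ CARD('n)\<bar> = L ^ CARD('n)" using Lp by simp
      finally have "\<bar>det (matrix D)\<bar> = \<bar>det (matrix F)\<bar> * L ^ CARD('n)" .
      also have "\<dots> \<le> J_sigma \<sigma> N * L ^ CARD('n)" using Fb Lp by (simp add: mult_right_mono)
      finally show ?thesis unfolding jd L_def[symmetric] by (simp add: mult.commute)
    qed
  qed
qed

lemma jac_linear: fixes F :: "real^'n \<Rightarrow> real^'n"
  assumes "linear F" shows "jac_det F x = det (matrix F)"
proof -
  have d: "(F has_derivative F) (at x)" by (rule linear_imp_has_derivative[OF assms])
  then have "F differentiable (at x)" unfolding differentiable_def by blast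
  moreover have "frechet_derivative F (at x) = F" using frechet_derivative_at[OF d] by simp
  ultimately show ?thesis unfolding jac_det_def by simp
qed


lemma lip_cont:
  fixes N :: "real^'n \<Rightarrow> real" and f :: "real^'n \<Rightarrow> 'b::real_normed_vector"
  assumes n: "is_norm_fn N" and lip: "\<forall>x y. norm (f x - f y) \<le> Lf * N (x - y)"
  shows "continuous_on UNIV f" "f \<in> borel_measurable lborel"
proof -
  obtain C where C: "C > 0" "\<forall>x. N x \<le> C * norm x" using nf_upper[OF n] by blast
  have "dist (f x) (f y) \<le> (\<bar>Lf\<bar> * C) * dist x y" for x y
  proof -
    have "norm (f x - f y) \<le> Lf * N (x - y)" using lip by blast
    also have "\<dots> \<le> \<bar>Lf\<bar> * N (x - y)" using nf_nonneg[OF n] by (simp add: mult_right_mono)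
    also have "\<dots> \<le> \<bar>Lf\<bar> * (C * norm (x - y))" using C(2) by (simp add: mult_left_mono)
    finally show ?thesis by (simp add: dist_norm mult.assoc)
  qed
  then have "(\<bar>Lf\<bar> * C)-lipschitz_on UNIV f" using C(1) by (intro lipschitz_onI) auto
  then show c: "continuous_on UNIV f" by (rule lipschitz_on_continuous_on)
  then show "f \<in> borel_measurable lborel" using borel_measurable_continuous_onI by simp
qed

lemma upper_bound:
  fixes \<sigma> N :: "real^'n \<Rightarrow> real" and \<theta> \<theta>' f :: "real^'n \<Rightarrow> real" and \<pi> :: "real^'n \<Rightarrow> real^'n"
  assumes s: "is_norm_fn \<sigma>" and n: "is_norm_fn N"
    and th'm: "\<theta>' \<in> borel_measurable lborel" and th'i: "integrable lborel \<theta>'"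
    and ae: "AE x in lebesgue. \<theta> x = \<theta>' x"
    and D: "in_Dn N f \<pi>"
  shows "\<bar>push_current \<theta> f \<pi>\<bar> \<le> L_sigma \<sigma> N \<pi> ^ CARD('n) *
           (\<integral>x. \<bar>f x\<bar> \<partial>density lborel (\<lambda>x. ennreal (\<bar>\<theta>' x\<bar> * J_sigma \<sigma> N)))"
proof -
  obtain B where B: "\<forall>x. \<bar>f x\<bar> \<le> B" using D unfolding in_Dn_def by blast
  obtain Lf where Lf: "\<forall>x y. \<bar>f x - f y\<bar> \<le> Lf * N (x - y)" using D unfolding in_Dn_def by blast
  obtain Lp where Lp: "\<forall>x y. norm (\<pi> x - \<pi> y) \<le> Lp * N (x - y)" using D unfolding in_Dn_def by blast
  have fm: "f \<in> borel_measurable lborel" using lip_cont(2)[OF n, of f Lf] Lf by simp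
  define L where "L = L_sigma \<sigma> N \<pi>"
  define J where "J = J_sigma \<sigma> N"
  define K where "K = L ^ CARD('n) * J"
  have L0: "0 \<le> L" unfolding L_def by (rule L_sigma_props(3)[OF s n Lp])
  have J0: "0 \<le> J" unfolding J_def by (rule J_nonneg[OF s n])
  have K0: "0 \<le> K" unfolding K_def using L0 J0 by simp
  have jb: "\<bar>jac_det \<pi> x\<bar> \<le> K" for x unfolding K_def L_def J_def by (rule jac_bound[OF s n Lp])
  define u where "u x = K * \<bar>\<theta>' x\<bar> * \<bar>f x\<bar>" for x
  have um: "u \<in> borel_measurable lborel" unfolding u_def using th'm fm by measurable
  have B0: "0 \<le> B" using B by (meson abs_ge_zero order_trans)
  have ui: "integrable lborel u"
  proof (rule Bochner_Integration.integrable_bound[OF _ um])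
    show "integrable lborel (\<lambda>x. K * B * \<bar>\<theta>' x\<bar>)" using th'i by simp
    show "AE x in lborel. norm (u x) \<le> norm (K * B * \<bar>\<theta>' x\<bar>)"
    proof (rule AE_I2)
      fix x
      have "\<bar>\<theta>' x\<bar> * \<bar>f x\<bar> \<le> \<bar>\<theta>' x\<bar> * B" using B by (simp add: mult_left_mono)
      then have "K * (\<bar>\<theta>' x\<bar> * \<bar>f x\<bar>) \<le> K * (\<bar>\<theta>' x\<bar> * B)" using K0 by (rule mult_left_mono)
      then show "norm (u x) \<le> norm (K * B * \<bar>\<theta>' x\<bar>)" unfolding u_def using K0 B0
        by (simp add: abs_mult algebra_simps)
    qed
  qed
  have uil: "integrable lebesgue u" using ui um integrable_completion by blast
  have "\<bar>push_current \<theta> f \<pi>\<bar> \<le> (\<integral>x. \<bar>\<theta> x * f x * jac_det \<pi> x\<bar> \<partial>lebesgue)"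
    unfolding push_current_def by (rule integral_abs_bound)
  also have "\<dots> \<le> (\<integral>x. u x \<partial>lebesgue)"
  proof (rule integral_mono_AE'[OF uil])
    show "AE x in lebesgue. \<bar>\<theta> x * f x * jac_det \<pi> x\<bar> \<le> u x"
      using ae
    proof (rule AE_mp, intro AE_I2 impI)
      fix x assume eq: "\<theta> x = \<theta>' x"
      have "\<bar>\<theta> x * f x * jac_det \<pi> x\<bar> = \<bar>\<theta>' x\<bar> * \<bar>f x\<bar> * \<bar>jac_det \<pi> x\<bar>" by (simp add: eq abs_mult)
      also have "\<dots> \<le> \<bar>\<theta>' x\<bar> * \<bar>f x\<bar> * K" by (rule mult_left_mono[OF jb]) simp
      finally show "\<bar>\<theta> x * f x * jac_det \<pi> x\<bar> \<le> u x" unfolding u_def by (simp add: mult.commute mult.left_commute)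
    qed
    show "AE x in lebesgue. 0 \<le> u x" unfolding u_def using K0 by simp
  qed
  also have "\<dots> = (\<integral>x. u x \<partial>lborel)" using integral_completion[OF um] by simp
  also have "\<dots> = L ^ CARD('n) * (\<integral>x. \<bar>\<theta>' x\<bar> * J * \<bar>f x\<bar> \<partial>lborel)"
  proof -
    have "u x = L ^ CARD('n) * (\<bar>\<theta>' x\<bar> * J * \<bar>f x\<bar>)" for x unfolding u_def K_def by (simp add: ac_simps)
    then have "(\<integral>x. u x \<partial>lborel) = (\<integral>x. L ^ CARD('n) * (\<bar>\<theta>' x\<bar> * J * \<bar>f x\<bar>) \<partial>lborel)" by presburger
    also have "\<dots> = L ^ CARD('n) * (\<integral>x. \<bar>\<theta>' x\<bar> * J * \<bar>f x\<bar> \<partial>lborel)" by (rule integral_mult_right_zero)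
    finally show ?thesis .
  qed
  also have "(\<integral>x. \<bar>\<theta>' x\<bar> * J * \<bar>f x\<bar> \<partial>lborel) = (\<integral>x. \<bar>f x\<bar> \<partial>density lborel (\<lambda>x. ennreal (\<bar>\<theta>' x\<bar> * J)))"
    by (subst integral_density) (use fm th'm J0 in auto)
  finally show ?thesis unfolding L_def J_def .
qed


lemma test_ineq:
  fixes \<sigma> N :: "real^'n \<Rightarrow> real" and \<theta> f :: "real^'n \<Rightarrow> real"
  assumes s: "is_norm_fn \<sigma>" and n: "is_norm_fn N"
    and mb: "mass_bound N (L_sigma \<sigma> N) (push_current \<theta>) \<nu>"
    and fB: "\<exists>B. \<forall>x. \<bar>f x\<bar> \<le> B" and fL: "\<exists>L. \<forall>x y. \<bar>f x - f y\<bar> \<le> L * N (x - y)"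
  shows "J_sigma \<sigma> N * \<bar>\<integral>x. \<theta> x * f x \<partial>lebesgue\<bar> \<le> (\<integral>x. \<bar>f x\<bar> \<partial>\<nu>)"
proof -
  define a where "a = \<bar>\<integral>x. \<theta> x * f x \<partial>lebesgue\<bar>"
  define b where "b = (\<integral>x. \<bar>f x\<bar> \<partial>\<nu>)"
  have a0: "0 \<le> a" unfolding a_def by simp
  have b0: "0 \<le> b" unfolding b_def by (rule integral_nonneg_AE) simp
  obtain c where c: "c > 0" "\<forall>x. c * norm x \<le> \<sigma> x" using nf_lower[OF s] by blast
  have key: "r * a \<le> b" if rin: "r \<in> Jset \<sigma> N" for r
  proof -
    obtain F where F: "linear F" "{x. N x \<le> 1} \<subseteq> F -` {y. \<sigma> y \<le> 1}" "r \<le> \<bar>det (matrix F)\<bar>"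
      using Jset_elem[OF s n rin] by blast
    have Fb: "\<sigma> (F v) \<le> N v" for v
    proof (cases "v = 0")
      case True then show ?thesis using F(1) nf_0[OF s] nf_0[OF n] by (simp add: linear_0)
    next
      case False
      have Np: "N v > 0" using nf_pos[OF n False] .
      have "N ((1 / N v) *\<^sub>R v) = 1" using nf_scale[OF n, of "1 / N v" v] Np by simp
      then have "(1 / N v) *\<^sub>R v \<in> {x. N x \<le> 1}" by simp
      then have "(1 / N v) *\<^sub>R v \<in> F -` {y. \<sigma> y \<le> 1}" using F(2) by (rule subsetD[rotated])
      then have "\<sigma> (F ((1 / N v) *\<^sub>R v)) \<le> 1" by simp
      moreover have "\<sigma> (F ((1 / N v) *\<^sub>R v)) = \<sigma> (F v) / N v"
        using F(1) nf_scale[OF s, of "1 / N v" "F v"] Np by (simp add: linear_scale)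
      ultimately show ?thesis using Np by (simp add: divide_le_eq)
    qed
    have Flip: "\<forall>x y. norm (F x - F y) \<le> (1 / c) * N (x - y)"
    proof (intro allI)
      fix x y
      have "c * norm (F (x - y)) \<le> \<sigma> (F (x - y))" using c by blast
      also have "\<dots> \<le> N (x - y)" by (rule Fb)
      finally show "norm (F x - F y) \<le> (1 / c) * N (x - y)" using c(1) F(1)
        by (simp add: linear_diff field_simps)
    qed
    have inD: "in_Dn N f F" unfolding in_Dn_def using fB fL Flip by blast
    have LF0: "0 \<le> L_sigma \<sigma> N F" by (rule L_sigma_props(3)[OF s n Flip])
    have LF1: "L_sigma \<sigma> N F \<le> 1" by (rule L_sigma_le1[OF s n F(1)]) (use Fb in blast)
    have Ln: "L_sigma \<sigma> N F ^ CARD('n) \<le> 1" using LF0 LF1 by (rule power_le_one)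
    have "\<bar>push_current \<theta> f F\<bar> \<le> L_sigma \<sigma> N F ^ CARD('n) * b"
      using mb inD unfolding mass_bound_def b_def by blast
    also have "\<dots> \<le> b" using mult_right_mono[OF Ln b0] by simp
    finally have Tb: "\<bar>push_current \<theta> f F\<bar> \<le> b" .
    have "push_current \<theta> f F = (\<integral>x. \<theta> x * f x \<partial>lebesgue) * det (matrix F)"
      unfolding push_current_def jac_linear[OF F(1)] by (rule integral_mult_left_zero)
    then have "\<bar>push_current \<theta> f F\<bar> = a * \<bar>det (matrix F)\<bar>" unfolding a_def by (simp add: abs_mult)
    then have "a * \<bar>det (matrix F)\<bar> \<le> b" using Tb by simp
    moreover have "r * a \<le> \<bar>det (matrix F)\<bar> * a" using F(3) a0 by (rule mult_right_mono)
    ultimately show ?thesis by (simp add: mult.commute)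
  qed
  show ?thesis
  proof (cases "a = 0")
    case True then show ?thesis using b0 unfolding a_def[symmetric] b_def[symmetric] by simp
  next
    case False
    then have ap: "a > 0" using a0 by simp
    have "Sup (Jset \<sigma> N) \<le> b / a"
      by (rule cSup_least[OF Jset_ne[OF s]]) (use key ap in \<open>simp add: pos_le_divide_eq\<close>)
    then have "J_sigma \<sigma> N * a \<le> b" unfolding J_sigma_Jset using ap by (simp add: pos_le_divide_eq)
    then show ?thesis unfolding a_def b_def .
  qed
qed


lemma bump:
  fixes K U :: "(real^'n) set"
  assumes "compact K" "open U" "K \<subseteq> U"
  shows "\<exists>f. (\<forall>x. 0 \<le> f x \<and> f x \<le> 1) \<and> (\<forall>x\<in>K. f x = 1) \<and> (\<forall>x. x \<notin> U \<longrightarrow> f x = 0)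
            \<and> (\<exists>L. \<forall>x y. \<bar>f x - f y\<bar> \<le> L * dist x y)"
proof (cases "K = {} \<or> U = UNIV")
  case True
  show ?thesis
  proof (cases "K = {}")
    case True
    then show ?thesis by (intro exI[of _ "\<lambda>x. 0"]) (auto intro!: exI[of _ 0])
  next
    case False
    then have "U = UNIV" using \<open>K = {} \<or> U = UNIV\<close> by blast
    then show ?thesis by (intro exI[of _ "\<lambda>x. 1"]) (auto intro!: exI[of _ 0])
  qed
next
  case False
  then have Kne: "K \<noteq> {}" and Une: "- U \<noteq> {}" by auto
  have cl: "closed (- U)" using assms(2) by auto
  define h where "h x = infdist x (- U)" for x
  have hc: "continuous_on K h" unfolding h_def by (intro continuous_intros)
  obtain x0 where x0: "x0 \<in> K" "\<forall>x\<in>K. h x0 \<le> h x"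
    using continuous_attains_inf[OF assms(1) Kne hc] by blast
  define \<delta> where "\<delta> = h x0"
  have "x0 \<notin> - U" using x0(1) assms(3) by auto
  then have d0: "\<delta> > 0" unfolding \<delta>_def h_def using in_closed_iff_infdist_zero[OF cl Une, of x0] infdist_nonneg[of x0 "- U"] by linarith
  define f where "f x = min 1 (h x / \<delta>)" for x
  have "\<forall>x. 0 \<le> f x \<and> f x \<le> 1" unfolding f_def h_def using d0 by (simp add: infdist_nonneg)
  moreover have "\<forall>x\<in>K. f x = 1" unfolding f_def using x0(2) d0 \<delta>_def by (simp add: min_def)
  moreover have "\<forall>x. x \<notin> U \<longrightarrow> f x = 0" unfolding f_def h_def by simp
  moreover have "\<forall>x y. \<bar>f x - f y\<bar> \<le> (1 / \<delta>) * dist x y"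
  proof (intro allI)
    fix x y
    have "\<bar>f x - f y\<bar> \<le> \<bar>h x / \<delta> - h y / \<delta>\<bar>" unfolding f_def by (smt (verit) min_def)
    also have "\<dots> = \<bar>h x - h y\<bar> / \<delta>" using d0 by (simp add: diff_divide_distrib[symmetric])
    also have "\<dots> \<le> dist x y / \<delta>" unfolding h_def using d0 by (intro divide_right_mono infdist_triangle_abs) auto
    finally show "\<bar>f x - f y\<bar> \<le> (1 / \<delta>) * dist x y" by simp
  qed
  ultimately show ?thesis by blast
qed


lemma approx_KU:
  fixes M :: "(real^'n) measure"
  assumes sM: "sets M = sets borel" and fin: "finite_measure M" and B: "B \<in> sets borel" and e: "e > 0"
  shows "\<exists>K U. compact K \<and> open U \<and> K \<subseteq> B \<and> B \<subseteq> U \<and> measure M (U - K) < e"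
proof -
  interpret finite_measure M by (rule fin)
  have sp: "space M = UNIV" using sM by (metis sets_eq_imp_space_eq space_borel)
  have fin2: "emeasure M (space M) \<noteq> \<infinity>" by (simp add: emeasure_eq_measure)
  have e2: "e / 4 > 0" using e by simp
  have inn: "emeasure M B = (SUP K \<in> {K. K \<subseteq> B \<and> compact K}. emeasure M K)"
    by (rule inner_regular[OF sM fin2 B])
  have out: "emeasure M B = (INF U \<in> {U. B \<subseteq> U \<and> open U}. emeasure M U)"
    by (rule outer_regular[OF sM fin2 B])
  have "{} \<in> {K. K \<subseteq> B \<and> compact K}" by auto
  then have neK: "{K. K \<subseteq> B \<and> compact K} \<noteq> {}" by blast
  have finB: "emeasure M B \<noteq> \<infinity>" by (simp add: emeasure_eq_measure)
  from SUP_approx_ennreal[OF e2 neK inn finB]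
  obtain K where K: "K \<in> {K. K \<subseteq> B \<and> compact K}" "emeasure M B < emeasure M K + ennreal (e / 4)"
    by (elim bexE)
  from INF_approx_ennreal[OF e2 out finB]
  obtain U where U: "U \<in> {U. B \<subseteq> U \<and> open U}" "emeasure M U < emeasure M B + ennreal (e / 4)"
    by (elim bexE)
  have Bs: "B \<in> sets M" using B sM by simp
  have Ks: "K \<in> sets M" using K(1) sM by (simp add: borel_compact)
  have Us: "U \<in> sets M" using U(1) sM by (simp add: borel_open)
  have "ennreal (measure M B) < ennreal (measure M K + e / 4)"
    using K(2) e unfolding emeasure_eq_measure by (subst ennreal_plus) auto
  then have m1: "measure M B \<le> measure M K + e / 4" by (subst (asm) ennreal_less_iff) auto
  have "ennreal (measure M U) < ennreal (measure M B + e / 4)"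
    using U(2) e unfolding emeasure_eq_measure by (subst ennreal_plus) auto
  then have m2: "measure M U \<le> measure M B + e / 4" by (subst (asm) ennreal_less_iff) auto
  have "measure M (U - K) = measure M U - measure M K"
    using K(1) U(1) Ks Us by (intro finite_measure_Diff) auto
  then have "measure M (U - K) < e" using m1 m2 e by simp
  then show ?thesis using K(1) U(1) by blast
qed


lemma set_ineq:
  fixes \<sigma> N :: "real^'n \<Rightarrow> real" and \<theta> \<theta>' :: "real^'n \<Rightarrow> real" and \<nu> :: "(real^'n) measure"
  assumes s: "is_norm_fn \<sigma>" and n: "is_norm_fn N"
    and mb: "mass_bound N (L_sigma \<sigma> N) (push_current \<theta>) \<nu>"
    and th'm: "\<theta>' \<in> borel_measurable lborel" and th'i: "integrable lborel \<theta>'"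
    and ae: "AE x in lebesgue. \<theta> x = \<theta>' x" and thmeas: "\<theta> \<in> borel_measurable lebesgue"
    and B: "B \<in> sets borel"
  shows "J_sigma \<sigma> N * \<bar>\<integral>x. \<theta>' x * indicator B x \<partial>lborel\<bar> \<le> measure \<nu> B"
proof -
  define J where "J = J_sigma \<sigma> N"
  have J0: "0 \<le> J" unfolding J_def by (rule J_nonneg[OF s n])
  have s\<nu>: "sets \<nu> = sets borel" and f\<nu>: "finite_measure \<nu>" using mb unfolding mass_bound_def by auto
  interpret nu: finite_measure \<nu> by (rule f\<nu>)
  have sp\<nu>: "space \<nu> = UNIV" using s\<nu> by (metis sets_eq_imp_space_eq space_borel)
  define M where "M = density lborel (\<lambda>x. ennreal \<bar>\<theta>' x\<bar>)"
  have sM: "sets M = sets borel" unfolding M_def by simp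
  have spM: "space M = UNIV" unfolding M_def by simp
  have "(\<integral>\<^sup>+x. ennreal (norm (\<theta>' x)) \<partial>lborel) < \<infinity>" using th'i unfolding integrable_iff_bounded by blast
  then have "emeasure M (space M) \<noteq> \<infinity>"
    unfolding M_def using th'm by (simp add: emeasure_density)
  then have fM: "finite_measure M" by (rule finite_measureI)
  interpret mm: finite_measure M by (rule fM)
  have intM: "(\<integral>x. indicator X x \<partial>M) = (\<integral>x. \<bar>\<theta>' x\<bar> * indicator X x \<partial>lborel)" if X: "X \<in> sets borel" for X :: "(real^'n) set"
    unfolding M_def by (subst integral_density) (use th'm X in auto)
  have measM: "measure M X = (\<integral>x. \<bar>\<theta>' x\<bar> * indicator X x \<partial>lborel)" if X: "X \<in> sets borel" for X :: "(real^'n) set"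
    using intM[OF X] spM by simp
  obtain cN where cN: "cN > 0" "\<forall>x. cN * norm x \<le> N x" using nf_lower[OF n] by blast
  define lam where "lam = (\<integral>x. \<theta>' x * indicator B x \<partial>lborel)"
  have main: "J * \<bar>lam\<bar> \<le> measure \<nu> B + e" if e: "e > 0" for e
  proof -
    define \<epsilon> where "\<epsilon> = e / (1 + J)"
    have \<epsilon>: "\<epsilon> > 0" unfolding \<epsilon>_def using e J0 by simp
    have "(1 + J) * \<epsilon> = e" unfolding \<epsilon>_def using J0 by simp
    then have e_eq: "\<epsilon> + J * \<epsilon> = e" by (simp add: algebra_simps)
    obtain K1 U1 where KU1: "compact K1" "open U1" "K1 \<subseteq> B" "B \<subseteq> U1" "measure \<nu> (U1 - K1) < \<epsilon>"
      using approx_KU[OF s\<nu> f\<nu> B \<epsilon>] by blast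
    obtain K2 U2 where KU2: "compact K2" "open U2" "K2 \<subseteq> B" "B \<subseteq> U2" "measure M (U2 - K2) < \<epsilon>"
      using approx_KU[OF sM fM B \<epsilon>] by blast
    define K where "K = K1 \<union> K2"
    define U where "U = U1 \<inter> U2"
    have K: "compact K" "K \<subseteq> B" unfolding K_def using KU1 KU2 by auto
    have U: "open U" "B \<subseteq> U" unfolding U_def using KU1 KU2 by auto
    have UKs: "U - K \<in> sets borel" using K U by (simp add: borel_open borel_compact sets.Diff)
    have "measure \<nu> (U - K) \<le> measure \<nu> (U1 - K1)"
      by (rule nu.finite_measure_mono) (use KU1 s\<nu> in \<open>auto simp: K_def U_def borel_open borel_compact\<close>)
    then have m\<nu>: "measure \<nu> (U - K) < \<epsilon>" using KU1(5) by simp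
    have "measure M (U - K) \<le> measure M (U2 - K2)"
      by (rule mm.finite_measure_mono) (use KU2 sM in \<open>auto simp: K_def U_def borel_open borel_compact\<close>)
    then have mM: "measure M (U - K) < \<epsilon>" using KU2(5) by simp
    obtain f Lf where f: "\<forall>x. 0 \<le> f x \<and> f x \<le> 1" "\<forall>x\<in>K. f x = 1" "\<forall>x. x \<notin> U \<longrightarrow> f x = 0"
        "\<forall>x y. \<bar>f x - f y\<bar> \<le> Lf * dist x y"
      using bump[OF K(1) U(1) order_trans[OF K(2) U(2)]] by blast
    have fB: "\<exists>B. \<forall>x. \<bar>f x\<bar> \<le> B" using f(1) by (intro exI[of _ 1]) auto
    have fLN: "\<forall>x y. \<bar>f x - f y\<bar> \<le> (\<bar>Lf\<bar> / cN) * N (x - y)"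
    proof (intro allI)
      fix x y
      have "\<bar>f x - f y\<bar> \<le> Lf * dist x y" using f(4) by blast
      also have "\<dots> \<le> \<bar>Lf\<bar> * dist x y" by (simp add: mult_right_mono)
      also have "\<dots> \<le> \<bar>Lf\<bar> * (N (x - y) / cN)"
        using cN by (intro mult_left_mono) (auto simp: dist_norm pos_le_divide_eq mult.commute)
      finally show "\<bar>f x - f y\<bar> \<le> (\<bar>Lf\<bar> / cN) * N (x - y)" by simp
    qed
    then have fL: "\<exists>L. \<forall>x y. \<bar>f x - f y\<bar> \<le> L * N (x - y)" by blast
    have fm: "f \<in> borel_measurable lborel" using lip_cont(2)[OF n, of f "\<bar>Lf\<bar> / cN"] fLN by simp
    have T: "J * \<bar>\<integral>x. \<theta> x * f x \<partial>lebesgue\<bar> \<le> (\<integral>x. \<bar>f x\<bar> \<partial>\<nu>)"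
      unfolding J_def by (rule test_ineq[OF s n mb fB fL])
    have "(\<integral>x. \<theta> x * f x \<partial>lebesgue) = (\<integral>x. \<theta>' x * f x \<partial>lebesgue)"
    proof (rule integral_cong_AE)
      show "(\<lambda>x. \<theta> x * f x) \<in> borel_measurable lebesgue" using thmeas measurable_completion[OF fm] by simp
      show "(\<lambda>x. \<theta>' x * f x) \<in> borel_measurable lebesgue" using measurable_completion[OF th'm] measurable_completion[OF fm] by simp
      show "AE x in lebesgue. \<theta> x * f x = \<theta>' x * f x" using ae by auto
    qed
    also have "\<dots> = (\<integral>x. \<theta>' x * f x \<partial>lborel)" by (rule integral_completion) (use th'm fm in simp)
    finally have I: "(\<integral>x. \<theta> x * f x \<partial>lebesgue) = (\<integral>x. \<theta>' x * f x \<partial>lborel)" .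
    have i1: "integrable lborel (\<lambda>x. \<theta>' x * indicator B x)" using B th'i by (intro integrable_real_mult_indicator) auto
    have i2: "integrable lborel (\<lambda>x. \<theta>' x * f x)"
    proof (rule Bochner_Integration.integrable_bound[OF integrable_abs[OF th'i]])
      show "(\<lambda>x. \<theta>' x * f x) \<in> borel_measurable lborel" using th'm fm by simp
      show "AE x in lborel. norm (\<theta>' x * f x) \<le> norm \<bar>\<theta>' x\<bar>"
        using f(1) by (intro AE_I2) (simp add: abs_mult mult_left_le)
    qed
    have i3: "integrable lborel (\<lambda>x. \<bar>\<theta>' x\<bar> * indicator (U - K) x)"
      using UKs th'i by (intro integrable_real_mult_indicator) auto
    have "\<bar>lam - (\<integral>x. \<theta>' x * f x \<partial>lborel)\<bar> = \<bar>\<integral>x. \<theta>' x * indicator B x - \<theta>' x * f x \<partial>lborel\<bar>"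
      unfolding lam_def using i1 i2 by simp
    also have "\<dots> \<le> (\<integral>x. \<bar>\<theta>' x * indicator B x - \<theta>' x * f x\<bar> \<partial>lborel)" by (rule integral_abs_bound)
    also have "\<dots> \<le> (\<integral>x. \<bar>\<theta>' x\<bar> * indicator (U - K) x \<partial>lborel)"
    proof (rule integral_mono'[OF i3])
      fix x
      have "\<bar>indicator B x - f x\<bar> \<le> (indicator (U - K) x :: real)"
        using f K(2) U(2) by (cases "x \<in> K"; cases "x \<in> U"; cases "x \<in> B") (auto simp: indicator_def)
      then have "\<bar>\<theta>' x\<bar> * \<bar>indicator B x - f x\<bar> \<le> \<bar>\<theta>' x\<bar> * indicator (U - K) x" by (rule mult_left_mono) simp
      then show "\<bar>\<theta>' x * indicator B x - \<theta>' x * f x\<bar> \<le> \<bar>\<theta>' x\<bar> * indicator (U - K) x"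
        by (simp add: abs_mult right_diff_distrib[symmetric])
      show "0 \<le> \<bar>\<theta>' x\<bar> * indicator (U - K) x" by simp
    qed
    also have "\<dots> = measure M (U - K)" using measM[OF UKs] by simp
    finally have d1: "\<bar>lam - (\<integral>x. \<theta>' x * f x \<partial>lborel)\<bar> < \<epsilon>" using mM by simp
    have Us: "U \<in> sets \<nu>" using U s\<nu> by (simp add: borel_open)
    have "(\<integral>x. \<bar>f x\<bar> \<partial>\<nu>) \<le> (\<integral>x. indicator U x \<partial>\<nu>)"
    proof (rule integral_mono')
      show "integrable \<nu> (indicator U :: _ \<Rightarrow> real)" using Us by (simp add: integrable_indicator_iff sp\<nu> less_top[symmetric])
      fix x show "\<bar>f x\<bar> \<le> indicator U x" using f by (cases "x \<in> U") auto
      show "0 \<le> (indicator U x :: real)" by simp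
    qed
    also have "\<dots> = measure \<nu> U" using sp\<nu> by simp
    also have "\<dots> \<le> measure \<nu> (B \<union> (U - K))" by (rule nu.finite_measure_mono) (use Us B UKs s\<nu> K(2) in auto)
    also have "\<dots> \<le> measure \<nu> B + measure \<nu> (U - K)" by (rule measure_Un_le) (use B UKs s\<nu> in auto)
    finally have d2: "(\<integral>x. \<bar>f x\<bar> \<partial>\<nu>) \<le> measure \<nu> B + \<epsilon>" using m\<nu> by simp
    have "\<bar>lam\<bar> \<le> \<bar>\<integral>x. \<theta>' x * f x \<partial>lborel\<bar> + \<epsilon>" using d1 by linarith
    then have "J * \<bar>lam\<bar> \<le> J * \<bar>\<integral>x. \<theta>' x * f x \<partial>lborel\<bar> + J * \<epsilon>" using J0
      by (metis distrib_left mult_left_mono)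
    also have "J * \<bar>\<integral>x. \<theta>' x * f x \<partial>lborel\<bar> \<le> measure \<nu> B + \<epsilon>" using T d2 I by simp
    finally show ?thesis using e_eq by linarith
  qed
  have "J * \<bar>lam\<bar> \<le> measure \<nu> B" by (rule field_le_epsilon) (rule main)
  then show ?thesis unfolding J_def lam_def .
qed


theorem lemma5p2:
  fixes \<sigma> N :: "real^'n \<Rightarrow> real" and \<theta> :: "real^'n \<Rightarrow> real"
  assumes "is_norm_fn \<sigma>" and "is_norm_fn N"
    and "integrable lebesgue \<theta>"
  shows "\<exists>\<mu>. is_mass N (L_sigma \<sigma> N) (push_current \<theta>) \<mu> \<and>
           (\<forall>A\<in>sets borel. emeasure \<mu> A =
              (\<integral>\<^sup>+ x. ennreal (\<bar>\<theta> x\<bar> * J_sigma \<sigma> N) * indicator A x \<partial>lebesgue))"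
proof -
  note s = assms(1) and n = assms(2)
  have thmeas: "\<theta> \<in> borel_measurable lebesgue" using assms(3) by (rule borel_measurable_integrable)
  obtain \<theta>' where th': "\<theta>' \<in> borel_measurable lborel" "AE x in lborel. \<theta> x = \<theta>' x"
    using completion_ex_borel_measurable_real[OF thmeas] by blast
  have ae: "AE x in lebesgue. \<theta> x = \<theta>' x" using AE_completion[OF th'(2)] .
  have "integrable lebesgue \<theta>'"
    by (rule integrable_cong_AE_imp[OF assms(3) measurable_completion[OF th'(1)] ae])
  then have th'i: "integrable lborel \<theta>'" using integrable_completion[OF th'(1)] by blast
  define J where "J = J_sigma \<sigma> N"
  have J0: "0 \<le> J" unfolding J_def by (rule J_nonneg[OF s n])
  define g where "g x = \<bar>\<theta>' x\<bar> * J" for x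
  have gm: "g \<in> borel_measurable lborel" unfolding g_def using th'(1) by measurable
  have gi: "integrable lborel g" unfolding g_def using th'i by simp
  have g0: "0 \<le> g x" for x unfolding g_def using J0 by simp
  define \<mu> where "\<mu> = density lborel (\<lambda>x. ennreal (g x))"
  have s\<mu>: "sets \<mu> = sets borel" unfolding \<mu>_def by simp
  have em: "emeasure \<mu> A = (\<integral>\<^sup>+ x. ennreal (g x) * indicator A x \<partial>lborel)" if A: "A \<in> sets borel" for A
    unfolding \<mu>_def by (rule emeasure_density) (use gm A in auto)
  have eq: "emeasure \<mu> A = (\<integral>\<^sup>+ x. ennreal (\<bar>\<theta> x\<bar> * J_sigma \<sigma> N) * indicator A x \<partial>lebesgue)"
    if A: "A \<in> sets borel" for A
  proof -
    have "emeasure \<mu> A = (\<integral>\<^sup>+ x. ennreal (g x) * indicator A x \<partial>lebesgue)"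
      unfolding em[OF A] by (rule nn_integral_completion[symmetric])
    also have "\<dots> = (\<integral>\<^sup>+ x. ennreal (\<bar>\<theta> x\<bar> * J_sigma \<sigma> N) * indicator A x \<partial>lebesgue)"
      by (rule nn_integral_cong_AE) (use ae in \<open>auto simp: g_def J_def\<close>)
    finally show ?thesis .
  qed
  have nnI: "(\<integral>\<^sup>+ x. ennreal (g x) * indicator A x \<partial>lborel) = ennreal (\<integral>x. g x * indicator A x \<partial>lborel)"
    if A: "A \<in> sets borel" for A
  proof -
    have "(\<integral>\<^sup>+ x. ennreal (g x) * indicator A x \<partial>lborel) = (\<integral>\<^sup>+ x. ennreal (g x * indicator A x) \<partial>lborel)"
      by (rule nn_integral_cong) (simp split: split_indicator)
    also have "\<dots> = ennreal (\<integral>x. g x * indicator A x \<partial>lborel)"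
      by (rule nn_integral_eq_integral) (use A gi g0 in \<open>auto intro!: integrable_real_mult_indicator\<close>)
    finally show ?thesis .
  qed
  have fin\<mu>: "finite_measure \<mu>"
  proof (rule finite_measureI)
    have "space \<mu> = UNIV" unfolding \<mu>_def by simp
    then have "emeasure \<mu> (space \<mu>) = ennreal (\<integral>x. g x * indicator UNIV x \<partial>lborel)"
      using em[of UNIV] nnI[of UNIV] by simp
    then show "emeasure \<mu> (space \<mu>) \<noteq> \<infinity>" by simp
  qed
  have mb\<mu>: "mass_bound N (L_sigma \<sigma> N) (push_current \<theta>) \<mu>"
    unfolding mass_bound_def
  proof (intro conjI allI impI)
    show "sets \<mu> = sets borel" by (rule s\<mu>)
    show "finite_measure \<mu>" by (rule fin\<mu>)
    fix f \<pi> assume D: "in_Dn N f \<pi>"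
    show "\<bar>push_current \<theta> f \<pi>\<bar> \<le> L_sigma \<sigma> N \<pi> ^ CARD('n) * (\<integral>x. \<bar>f x\<bar> \<partial>\<mu>)"
      unfolding \<mu>_def g_def J_def by (rule upper_bound[OF s n th'(1) th'i ae D])
  qed
  have minimal: "emeasure \<mu> A \<le> emeasure \<nu> A"
    if mb: "mass_bound N (L_sigma \<sigma> N) (push_current \<theta>) \<nu>" and A: "A \<in> sets borel" for \<nu> A
  proof -
    have s\<nu>: "sets \<nu> = sets borel" and f\<nu>: "finite_measure \<nu>" using mb unfolding mass_bound_def by auto
    interpret nu: finite_measure \<nu> by (rule f\<nu>)
    define P where "P = {x. 0 < \<theta>' x}"
    define Q where "Q = {x. \<theta>' x < 0}"
    have Pb: "P \<in> sets borel" unfolding P_def using th'(1) by measurable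
    have Qb: "Q \<in> sets borel" unfolding Q_def using th'(1) by measurable
    have AP: "A \<inter> P \<in> sets borel" and AQ: "A \<inter> Q \<in> sets borel" using A Pb Qb by auto
    define lP where "lP = (\<integral>x. \<theta>' x * indicator (A \<inter> P) x \<partial>lborel)"
    define lQ where "lQ = (\<integral>x. \<theta>' x * indicator (A \<inter> Q) x \<partial>lborel)"
    have iP: "integrable lborel (\<lambda>x. \<theta>' x * indicator (A \<inter> P) x)" using AP th'i by (intro integrable_real_mult_indicator) auto
    have iQ: "integrable lborel (\<lambda>x. \<theta>' x * indicator (A \<inter> Q) x)" using AQ th'i by (intro integrable_real_mult_indicator) auto
    have pw: "g x * indicator A x = J * (\<theta>' x * indicator (A \<inter> P) x - \<theta>' x * indicator (A \<inter> Q) x)" for x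
      unfolding g_def P_def Q_def by (cases "x \<in> A"; cases "0 < \<theta>' x"; cases "\<theta>' x < 0") (auto simp: indicator_def)
    have h1: "(\<integral>x. g x * indicator A x \<partial>lborel) = J * (\<integral>x. \<theta>' x * indicator (A \<inter> P) x - \<theta>' x * indicator (A \<inter> Q) x \<partial>lborel)"
      unfolding pw by (rule integral_mult_right_zero)
    have h1b: "(\<integral>x. \<theta>' x * indicator (A \<inter> P) x - \<theta>' x * indicator (A \<inter> Q) x \<partial>lborel) = lP - lQ"
      unfolding lP_def lQ_def using iP iQ by simp
    have h2: "J * (lP - lQ) \<le> J * \<bar>lP\<bar> + J * \<bar>lQ\<bar>"
    proof -
      have "lP - lQ \<le> \<bar>lP\<bar> + \<bar>lQ\<bar>" by linarith
      then have "J * (lP - lQ) \<le> J * (\<bar>lP\<bar> + \<bar>lQ\<bar>)" using J0 by (rule mult_left_mono)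
      then show ?thesis by (simp add: distrib_left)
    qed
    have h3: "J * \<bar>lP\<bar> \<le> measure \<nu> (A \<inter> P)" unfolding J_def lP_def
      by (rule set_ineq[OF s n mb th'(1) th'i ae thmeas AP])
    have h4: "J * \<bar>lQ\<bar> \<le> measure \<nu> (A \<inter> Q)" unfolding J_def lQ_def
      by (rule set_ineq[OF s n mb th'(1) th'i ae thmeas AQ])
    have h5: "measure \<nu> (A \<inter> P) + measure \<nu> (A \<inter> Q) = measure \<nu> ((A \<inter> P) \<union> (A \<inter> Q))"
      by (rule nu.finite_measure_Union[symmetric]) (use AP AQ s\<nu> in \<open>auto simp: P_def Q_def\<close>)
    have h6: "measure \<nu> ((A \<inter> P) \<union> (A \<inter> Q)) \<le> measure \<nu> A" by (rule nu.finite_measure_mono) (use A s\<nu> in auto)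
    have le: "(\<integral>x. g x * indicator A x \<partial>lborel) \<le> measure \<nu> A"
      using h1[unfolded h1b] h2 h3 h4 h5 h6 by linarith

    have "emeasure \<mu> A = ennreal (\<integral>x. g x * indicator A x \<partial>lborel)" using em[OF A] nnI[OF A] by simp
    also have "\<dots> \<le> ennreal (measure \<nu> A)" using le by (rule ennreal_leI)
    also have "\<dots> = emeasure \<nu> A" by (simp add: nu.emeasure_eq_measure)
    finally show ?thesis .
  qed
  have "is_mass N (L_sigma \<sigma> N) (push_current \<theta>) \<mu>"
    unfolding is_mass_def using mb\<mu> minimal by blast
  then show ?thesis using eq by blast
qed


end
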